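(* Let $\kappa>0$ and let $Z=(Z_t)_{t\ge0}$ be a $\kappa$-self-similar Markov process with transition function $P$. Let $0<s\le t\le u$, $a,b\in[0,1]$ and let $B$ be a measurable set. Then \[ \int P(0,s,0,\mathrm{d}x)\, P\bigl(at,t,(at/s)^{\kappa}x,B\bigr) = P(0,t,0,B) \] and \[ \int P\bigl(at,t,(at/s)^{\kappa}x,\mathrm{d}y\bigr)\, P\bigl(bu,u,(bu/t)^{\kappa}y,B\bigr) = P\bigl(abu,u,(abu/s)^{\kappa}x,B\bigr) \] (the second identity holding for every $x$).
   Context: A real-valued càdlàg Markov process $Z=(Z_t)_{t\ge0}$ (Markov with respect to its natural filtration) is $\kappa$-self-similar if $(Z_{ct})_{t\ge0}$ and $(c^\kappa Z_t)_{t\ge0}$ have the same finite-dimensional distributions for every $c>0$; in particular $Z_0=0$. Its transition function is $P(s,t,x,\mathrm{d}y)=\mathbb{P}(Z_t\in\mathrm{d}y\mid Z_s=x)$, $s\le t$. Self-similarity gives the scaling property $P(cs,ct,c^\kappa x,c^\kappa\,\mathrm{d}y)=P(s,t,x,\mathrm{d}y)$ for all $c>0$, $s\le t$, $x$, where for a measure $M$ and $c>0$ the measure $M(c\,\mathrm{d}y)$ is defined by $\int g(y)M(c\,\mathrm{d}y)=\int g(y/c)M(\mathrm{d}y)$. *)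

theory Defs
  imports "HOL-Probability.Probability"
begin

definition nat_filt :: "'a measure \<Rightarrow> (real \<Rightarrow> 'a \<Rightarrow> real) \<Rightarrow> real \<Rightarrow> 'a measure" where
  "nat_filt M Z s = sigma (space M) {Z r -` A \<inter> space M | r A. r \<in> {0..s} \<and> A \<in> sets borel}"

definition cadlag_paths :: "'a measure \<Rightarrow> (real \<Rightarrow> 'a \<Rightarrow> real) \<Rightarrow> bool" where
  "cadlag_paths M Z \<longleftrightarrow> (\<forall>\<omega>\<in>space M. \<forall>t\<ge>0.
      continuous (at_right t) (\<lambda>r. Z r \<omega>) \<and>
      (t > 0 \<longrightarrow> (\<exists>l. ((\<lambda>r. Z r \<omega>) \<longlongrightarrow> l) (at_left t))))"

definition self_similar :: "'a measure \<Rightarrow> real \<Rightarrow> (real \<Rightarrow> 'a \<Rightarrow> real) \<Rightarrow> bool" where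
  "self_similar M \<kappa> Z \<longleftrightarrow> (\<forall>c>0. \<forall>J. finite J \<and> J \<subseteq> {0..} \<longrightarrow>
      distr M (PiM J (\<lambda>_. borel)) (\<lambda>\<omega>. \<lambda>j\<in>J. Z (c * j) \<omega>) =
      distr M (PiM J (\<lambda>_. borel)) (\<lambda>\<omega>. \<lambda>j\<in>J. c powr \<kappa> * Z j \<omega>))"

definition transition_function :: "(real \<Rightarrow> real \<Rightarrow> real \<Rightarrow> real measure) \<Rightarrow> bool" where
  "transition_function P \<longleftrightarrow>
     (\<forall>s t x. 0 \<le> s \<and> s \<le> t \<longrightarrow> prob_space (P s t x) \<and> sets (P s t x) = sets borel) \<and>
     (\<forall>s t B. 0 \<le> s \<and> s \<le> t \<and> B \<in> sets borel \<longrightarrow>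
        (\<lambda>x. emeasure (P s t x) B) \<in> borel_measurable borel) \<and>
     (\<forall>s x. 0 \<le> s \<longrightarrow> P s s x = return borel x) \<and>
     (\<forall>s t u x B. 0 \<le> s \<and> s \<le> t \<and> t \<le> u \<and> B \<in> sets borel \<longrightarrow>
        emeasure (P s u x) B = (\<integral>\<^sup>+ y. emeasure (P t u y) B \<partial>(P s t x)))"

definition markov_with_transition ::
  "'a measure \<Rightarrow> (real \<Rightarrow> 'a \<Rightarrow> real) \<Rightarrow> (real \<Rightarrow> real \<Rightarrow> real \<Rightarrow> real measure) \<Rightarrow> bool" where
  "markov_with_transition M Z P \<longleftrightarrow> transition_function P \<and>
     (\<forall>s t B. 0 \<le> s \<and> s \<le> t \<and> B \<in> sets borel \<longrightarrow>
        (AE \<omega> in M. real_cond_exp M (nat_filt M Z s) (\<lambda>\<omega>. indicator B (Z t \<omega>)) \<omega>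
                     = measure (P s t (Z s \<omega>)) B))"

text \<open>Scaling property of the transition function:
  P(cs,ct,c^kappa x, c^kappa dy) = P(s,t,x,dy), where M(c dy) is the image of M under y \<mapsto> y/c.\<close>
definition scaling_property :: "real \<Rightarrow> (real \<Rightarrow> real \<Rightarrow> real \<Rightarrow> real measure) \<Rightarrow> bool" where
  "scaling_property \<kappa> P \<longleftrightarrow> (\<forall>c s t x. c > 0 \<and> 0 \<le> s \<and> s \<le> t \<longrightarrow>
      distr (P (c * s) (c * t) (c powr \<kappa> * x)) borel (\<lambda>y. y / c powr \<kappa>) = P s t x)"

end

theory Submission
  imports Defs
begin

lemma scale_int:
  assumes tf: "transition_function P" and sc: "scaling_property \<kappa> P"
    and c: "c > 0" and st: "0 \<le> s" "s \<le> t" and g: "g \<in> borel_measurable borel"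
  shows "(\<integral>\<^sup>+ y. g (c powr \<kappa> * y) \<partial>(P s t x)) = (\<integral>\<^sup>+ y. g y \<partial>(P (c * s) (c * t) (c powr \<kappa> * x)))"
proof -
  let ?N = "P (c * s) (c * t) (c powr \<kappa> * x)"
  have eq0: "distr ?N borel (\<lambda>y. y / c powr \<kappa>) = P s t x"
    by (rule sc[unfolded scaling_property_def, rule_format]; use c st in auto)
  note eq = eq0[symmetric]
  have "0 \<le> c * s" "c * s \<le> c * t" using c st by (auto intro: mult_left_mono)
  note cs = this
  have "sets ?N = sets borel"
    by (rule conjunct2[OF conjunct1[OF tf[unfolded transition_function_def], rule_format]]; use cs in auto)
  hence m: "(\<lambda>y. y / c powr \<kappa>) \<in> measurable ?N borel"
    unfolding measurable_cong_sets[OF _ refl] by (subst measurable_cong_sets[OF \<open>sets ?N = sets borel\<close> refl]) simp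
  have gm: "(\<lambda>y. g (c powr \<kappa> * y)) \<in> borel_measurable borel"
    using g by measurable
  have "(\<integral>\<^sup>+ y. g (c powr \<kappa> * y) \<partial>(P s t x)) = (\<integral>\<^sup>+ y. g (c powr \<kappa> * (y / c powr \<kappa>)) \<partial>?N)"
    unfolding eq by (rule nn_integral_distr[OF m]) (simp add: gm)
  also have "\<dots> = (\<integral>\<^sup>+ y. g y \<partial>?N)" using c by simp
  finally show ?thesis .
qed

lemma const_int:
  assumes "prob_space N"
  shows "(\<integral>\<^sup>+ y. k \<partial>N) = k"
  using assms by (simp add: prob_space.emeasure_space_1)

theorem lemma2p1:
  fixes M :: "'a measure" and Z :: "real \<Rightarrow> 'a \<Rightarrow> real"
    and P :: "real \<Rightarrow> real \<Rightarrow> real \<Rightarrow> real measure"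
    and \<kappa> s t u a b :: real and B :: "real set"
  assumes "\<kappa> > 0"
    and "prob_space M"
    and "\<forall>t\<ge>0. Z t \<in> borel_measurable M"
    and "cadlag_paths M Z"
    and "self_similar M \<kappa> Z"
    and "markov_with_transition M Z P"
    and "scaling_property \<kappa> P"
    and "0 < s" "s \<le> t" "t \<le> u"
    and "a \<in> {0..1}" "b \<in> {0..1}"
    and "B \<in> sets borel"
  shows "((\<integral>\<^sup>+ x. emeasure (P (a * t) t ((a * t / s) powr \<kappa> * x)) B \<partial>(P 0 s 0))
           = emeasure (P 0 t 0) B)
       \<and> (\<forall>x. (\<integral>\<^sup>+ y. emeasure (P (b * u) u ((b * u / t) powr \<kappa> * y)) B
                  \<partial>(P (a * t) t ((a * t / s) powr \<kappa> * x)))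
           = emeasure (P (a * b * u) u ((a * b * u / s) powr \<kappa> * x)) B)"
proof -
  have tf: "transition_function P" by (rule conjunct1[OF assms(6)[unfolded markov_with_transition_def]])
  note sc = assms(7)
  note tfd = tf[unfolded transition_function_def]
  have ps: "\<And>s t x. 0 \<le> s \<Longrightarrow> s \<le> t \<Longrightarrow> prob_space (P s t x)"
    by (rule conjunct1[OF conjunct1[OF tfd, rule_format]]; auto)
  have meas: "\<And>s t. 0 \<le> s \<Longrightarrow> s \<le> t \<Longrightarrow> (\<lambda>x. emeasure (P s t x) B) \<in> borel_measurable borel"
    by (rule conjunct1[OF conjunct2[OF tfd], rule_format]; use assms(13) in auto)
  have ck: "\<And>s t u x. 0 \<le> s \<Longrightarrow> s \<le> t \<Longrightarrow> t \<le> u \<Longrightarrow>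
      emeasure (P s u x) B = (\<integral>\<^sup>+ y. emeasure (P t u y) B \<partial>(P s t x))"
    by (rule conjunct2[OF conjunct2[OF conjunct2[OF tfd]], rule_format]; use assms(13) in auto)
  have a0: "0 \<le> a" "a \<le> 1" "0 \<le> b" "b \<le> 1" using assms(11,12) by auto
  have tpos: "t > 0" "u > 0" using assms(8-10) by auto
  have at: "a * t \<le> t" "0 \<le> a * t" using a0 tpos by (auto simp: mult_left_le_one_le)
  have bu: "b * u \<le> u" "0 \<le> b * u" using a0 tpos by (auto simp: mult_left_le_one_le)
  show ?thesis
  proof
    show "(\<integral>\<^sup>+ x. emeasure (P (a * t) t ((a * t / s) powr \<kappa> * x)) B \<partial>(P 0 s 0))
           = emeasure (P 0 t 0) B"
    proof (cases "a = 0")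
      case True
      have "prob_space (P 0 s 0)" using ps[of 0 s 0] assms(8) by simp
      then show ?thesis using True by (simp add: prob_space.emeasure_space_1)
    next
      case False
      hence c: "a * t / s > 0" using a0 tpos assms(8) by auto
      have "(\<integral>\<^sup>+ x. emeasure (P (a * t) t ((a * t / s) powr \<kappa> * x)) B \<partial>(P 0 s 0))
          = (\<integral>\<^sup>+ x. emeasure (P (a * t) t x) B \<partial>(P ((a * t / s) * 0) ((a * t / s) * s) ((a * t / s) powr \<kappa> * 0)))"
        by (rule scale_int[OF tf sc c _ _ meas]) (use assms(8) at in auto)
      also have "\<dots> = (\<integral>\<^sup>+ x. emeasure (P (a * t) t x) B \<partial>(P 0 (a * t) 0))"
        using assms(8) by simp
      also have "\<dots> = emeasure (P 0 t 0) B" using ck[of 0 "a * t" t 0] at by simp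
      finally show ?thesis .
    qed
  next
    show "\<forall>x. (\<integral>\<^sup>+ y. emeasure (P (b * u) u ((b * u / t) powr \<kappa> * y)) B
                  \<partial>(P (a * t) t ((a * t / s) powr \<kappa> * x)))
           = emeasure (P (a * b * u) u ((a * b * u / s) powr \<kappa> * x)) B"
    proof
      fix x
      show "(\<integral>\<^sup>+ y. emeasure (P (b * u) u ((b * u / t) powr \<kappa> * y)) B
                  \<partial>(P (a * t) t ((a * t / s) powr \<kappa> * x)))
           = emeasure (P (a * b * u) u ((a * b * u / s) powr \<kappa> * x)) B"
      proof (cases "b = 0")
        case True
        have "prob_space (P (a * t) t ((a * t / s) powr \<kappa> * x))" using ps[OF at(2) at(1)] by simp
        then show ?thesis using True by (simp add: prob_space.emeasure_space_1)
      next
        case False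
        hence d: "b * u / t > 0" using a0 tpos by auto
        have "(\<integral>\<^sup>+ y. emeasure (P (b * u) u ((b * u / t) powr \<kappa> * y)) B
                  \<partial>(P (a * t) t ((a * t / s) powr \<kappa> * x)))
          = (\<integral>\<^sup>+ y. emeasure (P (b * u) u y) B
                  \<partial>(P ((b * u / t) * (a * t)) ((b * u / t) * t) ((b * u / t) powr \<kappa> * ((a * t / s) powr \<kappa> * x))))"
          by (rule scale_int[OF tf sc d _ _ meas]) (use at bu in auto)
        also have "(b * u / t) * (a * t) = a * b * u" using tpos by (simp add: field_simps)
        also have "(b * u / t) * t = b * u" using tpos by simp
        also have "(b * u / t) powr \<kappa> * ((a * t / s) powr \<kappa> * x) = (a * b * u / s) powr \<kappa> * x"
        proof -
          have "(b * u / t) powr \<kappa> * (a * t / s) powr \<kappa> = ((b * u / t) * (a * t / s)) powr \<kappa>"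
            using d a0 tpos assms(8) by (intro powr_mult[symmetric]; auto)
          also have "(b * u / t) * (a * t / s) = a * b * u / s" using tpos by (simp add: field_simps)
          finally show ?thesis by (simp add: mult.assoc)
        qed
        also have "(\<integral>\<^sup>+ y. emeasure (P (b * u) u y) B \<partial>(P (a * b * u) (b * u) ((a * b * u / s) powr \<kappa> * x)))
            = emeasure (P (a * b * u) u ((a * b * u / s) powr \<kappa> * x)) B"
        proof -
          have "a * (b * u) \<le> b * u" using a0 bu by (simp add: mult_left_le_one_le)
          hence "a * b * u \<le> b * u" by (simp add: mult.assoc)
          moreover have "0 \<le> a * b * u" using a0 bu by simp
          ultimately show ?thesis using ck[of "a * b * u" "b * u" u] bu by simp
        qed
        finally show ?thesis .
      qed
    qed
  qed
qed

end
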